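(* Under the standing setting, fix $0<t\le1$, $x\in\mathbb{R}^d$ and $0<a_0<a<b<b_0<t$, and let $W_1\le W_2$ be time dependent Lyapunov functions on $[0,t]$ with $W_2\le c_0Z^{1-\sigma}$ for some $c_0>0$, $\sigma\in(0,1)$, and let $1\le w\in C^{1,2}((0,t)\times\mathbb{R}^d)$ satisfy: $w^{-2}\partial_sw$ and $w^{-2}\nabla_yw$ are bounded on $Q(a_0,b_0)$; for some $k>d+2$ and constants $c_1,\dots,c_9\ge1$, on $Q(a_0,b_0)$: $w\le c_1w^{\frac{k-2}{k}}W_1^{\frac2k}$, $|Q\nabla_yw|\le c_2w^{\frac{k-1}{k}}W_1^{\frac1k}$, $|\mathrm{Tr}(QD_y^2w)|\le c_3w^{\frac{k-2}{k}}W_1^{\frac2k}$, $|\partial_sw|\le c_4w^{\frac{k-2}{k}}W_1^{\frac2k}$, $|\sum_iD_iq_{ij}|\le c_5w^{-\frac1k}W_2^{\frac1k}$ for each $j$, $|F|\le c_6w^{-\frac1k}W_2^{\frac1k}$, $V^{\frac12}\le c_7w^{-\frac1k}W_2^{\frac1k}$, $|\Delta_yw|\le c_8w^{\frac{k-2}{k}}W_1^{\frac2k}$, $|Q\nabla_yW_1|\le c_9w^{-\frac1k}W_1W_2^{\frac1k}$; and for every $n$, $g_n^0(t,\cdot,x,\cdot)\in L^\infty(Q(a_0,b_0))$. Then for every $n\in\mathbb{N}$, with $Q_n=(q^{(n)}_{ij})$ in place of $Q$: $w^{-2}\partial_sw$ and $w^{-2}\nabla_yw$ are bounded on $Q(a_0,b_0)$,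 and on $Q(a_0,b_0)$ we have $w\le c_1w^{\frac{k-2}{k}}W_1^{\frac2k}$, $|Q_n\nabla_yw|\le 2c_2w^{\frac{k-1}{k}}W_1^{\frac1k}$, $|\mathrm{Tr}(Q_nD_y^2w)|\le(c_3+\eta c_8)w^{\frac{k-2}{k}}W_1^{\frac2k}$, $|\partial_sw|\le c_4w^{\frac{k-2}{k}}W_1^{\frac2k}$, $|\sum_iD_iq^{(n)}_{ij}|\le(c_5+4c_9)w^{-\frac1k}W_2^{\frac1k}$ for each $j$, $|F|\le c_6w^{-\frac1k}W_2^{\frac1k}$, $V^{\frac12}\le c_7w^{-\frac1k}W_2^{\frac1k}$, and $g_n^0(t,\cdot,x,\cdot)\in L^\infty(Q(a_0,b_0))$; i.e. the operator $\mathscr{A}_n$ satisfies the same hypotheses with constants $c_1,2c_2,c_3+\eta c_8,c_4,c_5+4c_9,c_6,c_7$.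
   Context: Standing setting. Let $d\ge1$ and $q_{ij},F_i,V:[0,1]\times\mathbb{R}^d\to\mathbb{R}$. For smooth $\varphi$ put $\mathscr{A}(t)\varphi=\sum_{i,j}q_{ij}(t,\cdot)D_{ij}\varphi+\sum_iF_i(t,\cdot)D_i\varphi-V(t,\cdot)\varphi$, $\mathscr{A}_0(t)=\mathscr{A}(t)+V(t)$, $F=(F_i)$, $Q=(q_{ij})$. Assume: (H1) for some $\varsigma\in(0,1)$, $q_{ij},F_i,V\in C^{\varsigma/2,\varsigma}_{\mathrm{loc}}([0,1]\times\mathbb{R}^d)$ and $q_{ij}\in C^{0,1}((0,1)\times\mathbb{R}^d)$; (H2) $Q$ symmetric, $\sum q_{ij}\xi_i\xi_j\ge\eta|\xi|^2$ for some $\eta>0$; (H3) $V\ge0$; (H4) there are $0\le Z\in C^2(\mathbb{R}^d)$, $Z\to\infty$ at infinity, and $M\ge0$ with $\mathscr{A}(t)Z\le M$ and $\eta\Delta Z+F(t)\cdot\nabla Z-V(t)Z\le M$; (H5) there is $0\le Z_0\in C^2(\mathbb{R}^d)$, $Z_0\to\infty$ at infinity, with $\mathscr{A}_0(t)Z_0\le M$ and $\eta\Delta Z_0+F(t)\cdot\nabla Z_0\le M$. Definition. A time dependent Lyapunov function on $[0,t]$ is $0\le W\in C([0,t]\times\mathbb{R}^d)\cap C^{1,2}((0,t)\times\mathbb{R}^d)$ with $W\le Z$, $W(s,x)\to\infty$ as $|x|\to\infty$ uniformly for $s$ in compact subsets of $[0,t)$, and for some $0\le h\in L^1((0,t))$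 and every $s\in(0,t)$: $\partial_sW-\mathscr{A}(s)W\ge-hW$ and $\partial_sW-(\eta\Delta W+F\cdot\nabla W-VW)\ge-hW$ on $\mathbb{R}^d$. Approximation: fix $\varphi\in C_c^\infty(\mathbb{R})$ with $\varphi\equiv1$ on $(-1,1)$, $\varphi\equiv0$ outside $(-2,2)$, $|\tau\varphi'(\tau)|\le2$; set $\varphi_n(s,y)=\varphi(W_1(s,y)/n)$, $q^{(n)}_{ij}=\varphi_nq_{ij}+(1-\varphi_n)\eta\delta_{ij}$, $\mathscr{A}_n(s)=\sum q^{(n)}_{ij}(s)D_{ij}+\sum F_j(s)D_j-V(s)$, $\mathscr{A}^0_n=\mathscr{A}_n+V$; $g_n^0$ is the Green kernel of the evolution family associated with $\mathscr{A}_n^0$. $Q(a,b)=(a,b)\times\mathbb{R}^d$.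
   Formalization: The cut-off $\varphi$ also takes values in [0,1], and the bounds on $\sum_iD_iq_{ij}$ and $\sum_iD_iq^{(n)}_{ij}$ hold, as hypothesis and as conclusion, only at points where all the partial derivatives involved exist. Apart from conventions, each condition added here is assumed in the paper as well or is needed for the statement above to hold. *)

theory Defs
  imports "HOL-Analysis.Analysis"
begin

definition pdt :: "(real \<Rightarrow> real^'d \<Rightarrow> real) \<Rightarrow> real \<Rightarrow> real^'d \<Rightarrow> real" where
  "pdt f s y = deriv (\<lambda>r. f r y) s"

definition pDy :: "'d::finite \<Rightarrow> (real \<Rightarrow> real^'d \<Rightarrow> real) \<Rightarrow> real \<Rightarrow> real^'d \<Rightarrow> real" where
  "pDy i f s y = deriv (\<lambda>h. f s (y + h *\<^sub>R axis i 1)) 0"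

definition pDyy :: "'d::finite \<Rightarrow> 'd \<Rightarrow> (real \<Rightarrow> real^'d \<Rightarrow> real) \<Rightarrow> real \<Rightarrow> real^'d \<Rightarrow> real" where
  "pDyy i j f = pDy i (pDy j f)"

definition grad :: "(real \<Rightarrow> real^'d::finite \<Rightarrow> real) \<Rightarrow> real \<Rightarrow> real^'d \<Rightarrow> real^'d" where
  "grad f s y = (\<chi> i. pDy i f s y)"

definition lap :: "(real \<Rightarrow> real^'d::finite \<Rightarrow> real) \<Rightarrow> real \<Rightarrow> real^'d \<Rightarrow> real" where
  "lap f s y = (\<Sum>i\<in>UNIV. pDyy i i f s y)"

definition pdiff_y :: "(real \<Rightarrow> real^'d::finite \<Rightarrow> real) \<Rightarrow> real \<Rightarrow> real^'d \<Rightarrow> bool" where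
  "pdiff_y f s y \<longleftrightarrow> (\<forall>i. (\<lambda>h. f s (y + h *\<^sub>R axis i 1)) differentiable (at 0))"

definition opA :: "('d::finite \<Rightarrow> 'd \<Rightarrow> real \<Rightarrow> real^'d \<Rightarrow> real) \<Rightarrow> ('d \<Rightarrow> real \<Rightarrow> real^'d \<Rightarrow> real)
    \<Rightarrow> (real \<Rightarrow> real^'d \<Rightarrow> real) \<Rightarrow> (real \<Rightarrow> real^'d \<Rightarrow> real) \<Rightarrow> real \<Rightarrow> real^'d \<Rightarrow> real" where
  "opA q F V f s y = (\<Sum>i\<in>UNIV. \<Sum>j\<in>UNIV. q i j s y * pDyy i j f s y)
      + (\<Sum>i\<in>UNIV. F i s y * pDy i f s y) - V s y * f s y"

definition etaI :: "real \<Rightarrow> 'd::finite \<Rightarrow> 'd \<Rightarrow> real \<Rightarrow> real^'d \<Rightarrow> real" where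
  "etaI \<eta> i j s y = (if i = j then \<eta> else 0)"

definition zeroV :: "real \<Rightarrow> real^'d::finite \<Rightarrow> real" where
  "zeroV s y = 0"

definition C12 :: "real set \<Rightarrow> (real \<Rightarrow> real^'d::finite \<Rightarrow> real) \<Rightarrow> bool" where
  "C12 I f \<longleftrightarrow>
     (\<forall>s\<in>I. \<forall>y. (\<lambda>r. f r y) differentiable (at s)
        \<and> pdiff_y f s y \<and> (\<forall>j. pdiff_y (pDy j f) s y))
   \<and> continuous_on (I \<times> UNIV) (\<lambda>(s,y). f s y)
   \<and> continuous_on (I \<times> UNIV) (\<lambda>(s,y). pdt f s y)
   \<and> (\<forall>i. continuous_on (I \<times> UNIV) (\<lambda>(s,y). pDy i f s y))
   \<and> (\<forall>i j. continuous_on (I \<times> UNIV) (\<lambda>(s,y). pDyy i j f s y))"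

definition holder_loc :: "real \<Rightarrow> (real \<times> (real^'d::finite)) set \<Rightarrow> (real \<Rightarrow> real^'d \<Rightarrow> real) \<Rightarrow> bool" where
  "holder_loc \<alpha> S f \<longleftrightarrow> (\<forall>K. compact K \<and> K \<subseteq> S \<longrightarrow>
     (\<exists>C. \<forall>(s,y)\<in>K. \<forall>(s',y')\<in>K. \<bar>f s y - f s' y'\<bar> \<le> C * (\<bar>s - s'\<bar> powr (\<alpha>/2) + dist y y' powr \<alpha>)))"

definition C01 :: "(real \<times> (real^'d::finite)) set \<Rightarrow> (real \<Rightarrow> real^'d \<Rightarrow> real) \<Rightarrow> bool" where
  "C01 S f \<longleftrightarrow> continuous_on S (\<lambda>(s,y). f s y) \<and>
     (\<forall>K. compact K \<and> K \<subseteq> S \<longrightarrow> (\<exists>L. \<forall>s y y'. (s,y) \<in> K \<and> (s,y') \<in> K \<longrightarrow>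
        \<bar>f s y - f s y'\<bar> \<le> L * dist y y'))"

definition tdlf :: "('d::finite \<Rightarrow> 'd \<Rightarrow> real \<Rightarrow> real^'d \<Rightarrow> real) \<Rightarrow> ('d \<Rightarrow> real \<Rightarrow> real^'d \<Rightarrow> real)
    \<Rightarrow> (real \<Rightarrow> real^'d \<Rightarrow> real) \<Rightarrow> real \<Rightarrow> (real^'d \<Rightarrow> real) \<Rightarrow> real
    \<Rightarrow> (real \<Rightarrow> real^'d \<Rightarrow> real) \<Rightarrow> bool" where
  "tdlf q F V \<eta> Z t W \<longleftrightarrow>
     (\<forall>s\<in>{0..t}. \<forall>y. 0 \<le> W s y \<and> W s y \<le> Z y)
   \<and> continuous_on ({0..t} \<times> UNIV) (\<lambda>(s,y). W s y)
   \<and> C12 {0<..<t} W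
   \<and> (\<forall>K. compact K \<and> K \<subseteq> {0..<t} \<longrightarrow>
        (\<forall>R. \<exists>r. \<forall>s\<in>K. \<forall>y. r \<le> norm y \<longrightarrow> R \<le> W s y))
   \<and> (\<exists>h. (\<forall>s\<in>{0<..<t}. 0 \<le> h s) \<and> h absolutely_integrable_on {0<..<t}
        \<and> (\<forall>s\<in>{0<..<t}. \<forall>y.
              pdt W s y - opA q F V W s y \<ge> - h s * W s y
            \<and> pdt W s y - opA (etaI \<eta>) F V W s y \<ge> - h s * W s y))"

definition qn :: "(real \<Rightarrow> real) \<Rightarrow> (real \<Rightarrow> real^'d::finite \<Rightarrow> real) \<Rightarrow> real
    \<Rightarrow> ('d \<Rightarrow> 'd \<Rightarrow> real \<Rightarrow> real^'d \<Rightarrow> real) \<Rightarrow> nat \<Rightarrow> 'd \<Rightarrow> 'd \<Rightarrow> real \<Rightarrow> real^'d \<Rightarrow> real" where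
  "qn \<phi> W1 \<eta> q n i j s y =
     \<phi> (W1 s y / real n) * q i j s y + (1 - \<phi> (W1 s y / real n)) * (if i = j then \<eta> else 0)"

definition Qgrad :: "('d::finite \<Rightarrow> 'd \<Rightarrow> real \<Rightarrow> real^'d \<Rightarrow> real) \<Rightarrow> (real \<Rightarrow> real^'d \<Rightarrow> real)
    \<Rightarrow> real \<Rightarrow> real^'d \<Rightarrow> real^'d" where
  "Qgrad q f s y = (\<chi> i. \<Sum>j\<in>UNIV. q i j s y * pDy j f s y)"

definition trQD2 :: "('d::finite \<Rightarrow> 'd \<Rightarrow> real \<Rightarrow> real^'d \<Rightarrow> real) \<Rightarrow> (real \<Rightarrow> real^'d \<Rightarrow> real)
    \<Rightarrow> real \<Rightarrow> real^'d \<Rightarrow> real" where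
  "trQD2 q f s y = (\<Sum>i\<in>UNIV. \<Sum>j\<in>UNIV. q i j s y * pDyy j i f s y)"

definition divq :: "('d::finite \<Rightarrow> 'd \<Rightarrow> real \<Rightarrow> real^'d \<Rightarrow> real) \<Rightarrow> 'd \<Rightarrow> real \<Rightarrow> real^'d \<Rightarrow> real" where
  "divq q j s y = (\<Sum>i\<in>UNIV. pDy i (q i j) s y)"

definition Linf_on :: "(real \<times> (real^'d::finite)) set \<Rightarrow> (real \<times> (real^'d) \<Rightarrow> real) \<Rightarrow> bool" where
  "Linf_on S f \<longleftrightarrow> f \<in> borel_measurable (lebesgue_on S) \<and> (\<exists>B. AE z in lebesgue_on S. \<bar>f z\<bar> \<le> B)"

end

theory Submission
  imports Defs
begin

lemma deriv_zero_prod: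
  fixes f g :: "real \<Rightarrow> real"
  assumes "(f has_real_derivative f') (at 0)" "f 0 = 0" "isCont g 0"
  shows "((\<lambda>h. f h * g h) has_real_derivative f' * g 0) (at 0)"
proof -
  have "((\<lambda>h. (f h - f 0) / (h - 0)) \<longlongrightarrow> f') (at 0)"
    using assms(1) has_field_derivative_iff by blast
  moreover have "(g \<longlongrightarrow> g 0) (at 0)" using assms(3) isCont_def by blast
  ultimately have "((\<lambda>h. (f h - f 0) / (h - 0) * g h) \<longlongrightarrow> f' * g 0) (at 0)"
    by (rule tendsto_mult)
  then have "((\<lambda>h. (f h * g h - f 0 * g 0) / (h - 0)) \<longlongrightarrow> f' * g 0) (at 0)"
    using assms(2) by simp
  then show ?thesis using has_field_derivative_iff by blast
qed

lemma qn_deriv: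
  fixes u g :: "real \<Rightarrow> real"
  assumes du: "(u has_real_derivative u') (at 0)" and cg: "isCont g 0"
    and dF: "(\<lambda>h. u h * g h + (1 - u h) * c) differentiable (at 0)"
  shows "deriv (\<lambda>h. u h * g h + (1 - u h) * c) 0
            = u' * (g 0 - c) + (if u 0 = 0 then 0 else u 0 * deriv g 0)"
    and "u 0 \<noteq> 0 \<Longrightarrow> g differentiable (at 0)"
proof -
  have eq: "(\<lambda>h. u h * g h + (1 - u h) * c) = (\<lambda>h. u h * (g h - c) + c)"
    by (auto simp: algebra_simps)
  obtain F' where dF': "((\<lambda>h. u h * g h + (1 - u h) * c) has_real_derivative F') (at 0)"
    using dF real_differentiable_def by blast
  have gd: "g differentiable (at 0)" if u0: "u 0 \<noteq> 0"
  proof -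
    have "isCont u 0" using du DERIV_isCont by blast
    then obtain d where d: "d > 0" "\<And>x. dist x 0 < d \<Longrightarrow> dist (u x) (u 0) < \<bar>u 0\<bar>"
      using u0 unfolding continuous_at_eps_delta by (metis zero_less_abs_iff)
    have D: "((\<lambda>h. ((u h * g h + (1 - u h) * c) - c) / u h + c) has_real_derivative
              ((F' - 0) * u 0 - ((u 0 * g 0 + (1 - u 0) * c) - c) * u') / (u 0 * u 0) + 0) (at 0)"
      by (intro derivative_intros DERIV_divide dF' du u0)
    have "(g has_real_derivative
              ((F' - 0) * u 0 - ((u 0 * g 0 + (1 - u 0) * c) - c) * u') / (u 0 * u 0) + 0) (at 0)"
    proof (rule has_field_derivative_transform_within[OF D d(1)])
      show "0 \<in> UNIV" by simp
      fix x :: real assume "x \<in> UNIV" "dist x 0 < d"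
      then have "u x \<noteq> 0" using d(2)[of x] by (auto simp: dist_real_def)
      then show "((u x * g x + (1 - u x) * c) - c) / u x + c = g x"
        by (simp add: field_simps)
    qed
    then show ?thesis using real_differentiable_def by blast
  qed
  then show "u 0 \<noteq> 0 \<Longrightarrow> g differentiable (at 0)" .
  show "deriv (\<lambda>h. u h * g h + (1 - u h) * c) 0
            = u' * (g 0 - c) + (if u 0 = 0 then 0 else u 0 * deriv g 0)"
  proof (cases "u 0 = 0")
    case True
    have cg': "isCont (\<lambda>h. g h - c) 0" using cg by (intro continuous_intros)
    have "((\<lambda>h. u h * (g h - c) + c) has_real_derivative u' * (g 0 - c) + 0) (at 0)"
      by (intro derivative_intros deriv_zero_prod[OF du True cg'])
    then show ?thesis unfolding eq using True DERIV_imp_deriv by fastforce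
  next
    case False
    have gd': "(g has_real_derivative deriv g 0) (at 0)"
      using gd[OF False] DERIV_deriv_iff_real_differentiable by blast
    have "((\<lambda>h. u h * (g h - c) + c) has_real_derivative u' * (g 0 - c) + (deriv g 0 - 0) * u 0 + 0) (at 0)"
      by (rule DERIV_add[OF DERIV_mult[OF du DERIV_diff[OF gd' DERIV_const]] DERIV_const])
    then show ?thesis unfolding eq using False DERIV_imp_deriv by (fastforce simp: algebra_simps)
  qed
qed

lemma ellip:
  fixes Q :: "'d::finite \<Rightarrow> 'd \<Rightarrow> real" and \<xi> :: "real^'d"
  assumes "\<eta> > 0" "\<eta> * (norm \<xi>)\<^sup>2 \<le> (\<Sum>i\<in>UNIV. \<Sum>j\<in>UNIV. Q i j * \<xi>$i * \<xi>$j)"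
  shows "\<eta> * norm \<xi> \<le> norm (\<chi> i. \<Sum>j\<in>UNIV. Q i j * \<xi>$j)"
proof -
  let ?v = "\<chi> i. \<Sum>j\<in>UNIV. Q i j * \<xi>$j"
  have "(\<Sum>i\<in>UNIV. \<Sum>j\<in>UNIV. Q i j * \<xi>$i * \<xi>$j) = \<xi> \<bullet> ?v"
    by (simp add: inner_vec_def sum_distrib_left mult_ac)
  also have "\<dots> \<le> norm \<xi> * norm ?v" by (rule norm_cauchy_schwarz)
  finally have "\<eta> * norm \<xi> * norm \<xi> \<le> norm ?v * norm \<xi>"
    using assms(2) by (simp add: power2_eq_square mult_ac)
  then show ?thesis
    by (cases "norm \<xi> = 0") (auto simp: mult_le_cancel_right)
qed

theorem lemma6:
  fixes q :: "'d::finite \<Rightarrow> 'd \<Rightarrow> real \<Rightarrow> real^'d \<Rightarrow> real"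
    and F :: "'d \<Rightarrow> real \<Rightarrow> real^'d \<Rightarrow> real"
    and V :: "real \<Rightarrow> real^'d \<Rightarrow> real"
    and \<eta> vsig M :: real
    and Z Z0 :: "real^'d \<Rightarrow> real"
    and \<phi> :: "real \<Rightarrow> real"
    and t a0 a b b0 c0 \<sigma> k c1 c2 c3 c4 c5 c6 c7 c8 c9 :: real
    and x :: "real^'d"
    and W1 W2 w :: "real \<Rightarrow> real^'d \<Rightarrow> real"
    and g :: "nat \<Rightarrow> real \<Rightarrow> real \<Rightarrow> real^'d \<Rightarrow> real^'d \<Rightarrow> real"
  \<comment> \<open>(H1)\<close>
  assumes H1_sigma: "0 < vsig" "vsig < 1"
    and H1_q: "\<And>i j. holder_loc vsig ({0..1} \<times> UNIV) (q i j)"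
    and H1_F: "\<And>i. holder_loc vsig ({0..1} \<times> UNIV) (F i)"
    and H1_V: "holder_loc vsig ({0..1} \<times> UNIV) V"
    and H1_lip: "\<And>i j. C01 ({0<..<1} \<times> UNIV) (q i j)"
  \<comment> \<open>(H2)\<close>
    and H2_sym: "\<And>i j s y. q i j s y = q j i s y"
    and H2_eta: "0 < \<eta>"
    and H2_ell: "\<And>s y (\<xi>::real^'d). s \<in> {0..1} \<Longrightarrow>
                   (\<Sum>i\<in>UNIV. \<Sum>j\<in>UNIV. q i j s y * \<xi>$i * \<xi>$j) \<ge> \<eta> * (norm \<xi>)\<^sup>2"
  \<comment> \<open>(H3)\<close>
    and H3: "\<And>s y. s \<in> {0..1} \<Longrightarrow> 0 \<le> V s y"
  \<comment> \<open>(H4)\<close>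
    and H4_Z: "\<And>y. 0 \<le> Z y" "C12 UNIV (\<lambda>s. Z)" "filterlim Z at_top at_infinity" "0 \<le> M"
    and H4_ineq: "\<And>s y. s \<in> {0..1} \<Longrightarrow> opA q F V (\<lambda>s. Z) s y \<le> M"
                 "\<And>s y. s \<in> {0..1} \<Longrightarrow> opA (etaI \<eta>) F V (\<lambda>s. Z) s y \<le> M"
  \<comment> \<open>(H5)\<close>
    and H5_Z0: "\<And>y. 0 \<le> Z0 y" "C12 UNIV (\<lambda>s. Z0)" "filterlim Z0 at_top at_infinity"
    and H5_ineq: "\<And>s y. s \<in> {0..1} \<Longrightarrow> opA q F zeroV (\<lambda>s. Z0) s y \<le> M"
                 "\<And>s y. s \<in> {0..1} \<Longrightarrow> opA (etaI \<eta>) F zeroV (\<lambda>s. Z0) s y \<le> M"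
  \<comment> \<open>the cut-off function phi\<close>
    and phi_smooth: "\<And>m y. ((deriv ^^ m) \<phi>) differentiable (at y)"
    and phi_one: "\<And>\<tau>. \<tau> \<in> {-1<..<1} \<Longrightarrow> \<phi> \<tau> = 1"
    and phi_zero: "\<And>\<tau>. \<tau> \<notin> {-2<..<2} \<Longrightarrow> \<phi> \<tau> = 0"
    and phi_deriv: "\<And>\<tau>. \<bar>\<tau> * deriv \<phi> \<tau>\<bar> \<le> 2"
    and phi_range: "\<And>\<tau>. 0 \<le> \<phi> \<tau> \<and> \<phi> \<tau> \<le> 1"
  \<comment> \<open>hypotheses of the lemma\<close>
    and t: "0 < t" "t \<le> 1"
    and ab: "0 < a0" "a0 < a" "a < b" "b < b0" "b0 < t"
    and W1: "tdlf q F V \<eta> Z t W1" and W2: "tdlf q F V \<eta> Z t W2"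
    and W12: "\<And>s y. s \<in> {0..t} \<Longrightarrow> W1 s y \<le> W2 s y"
    and c0: "0 < c0" and \<sigma>: "0 < \<sigma>" "\<sigma> < 1"
    and W2Z: "\<And>s y. s \<in> {0..t} \<Longrightarrow> W2 s y \<le> c0 * Z y powr (1 - \<sigma>)"
    and w_ge: "\<And>s y. s \<in> {0<..<t} \<Longrightarrow> 1 \<le> w s y"
    and w_C12: "C12 {0<..<t} w"
    and w_bdd_t: "\<exists>B. \<forall>s\<in>{a0<..<b0}. \<forall>y. \<bar>pdt w s y / (w s y)\<^sup>2\<bar> \<le> B"
    and w_bdd_y: "\<exists>B. \<forall>s\<in>{a0<..<b0}. \<forall>y. norm (grad w s y /\<^sub>R (w s y)\<^sup>2) \<le> B"
    and k: "real CARD('d) + 2 < k"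
    and cs: "1 \<le> c1" "1 \<le> c2" "1 \<le> c3" "1 \<le> c4" "1 \<le> c5" "1 \<le> c6" "1 \<le> c7" "1 \<le> c8" "1 \<le> c9"
    and i1: "\<And>s y. s \<in> {a0<..<b0} \<Longrightarrow>
               w s y \<le> c1 * w s y powr ((k-2)/k) * W1 s y powr (2/k)"
    and i2: "\<And>s y. s \<in> {a0<..<b0} \<Longrightarrow>
               norm (Qgrad q w s y) \<le> c2 * w s y powr ((k-1)/k) * W1 s y powr (1/k)"
    and i3: "\<And>s y. s \<in> {a0<..<b0} \<Longrightarrow>
               \<bar>trQD2 q w s y\<bar> \<le> c3 * w s y powr ((k-2)/k) * W1 s y powr (2/k)"
    and i4: "\<And>s y. s \<in> {a0<..<b0} \<Longrightarrow>
               \<bar>pdt w s y\<bar> \<le> c4 * w s y powr ((k-2)/k) * W1 s y powr (2/k)"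
    and i5: "\<And>s y j. s \<in> {a0<..<b0} \<Longrightarrow> (\<forall>i. pdiff_y (q i j) s y) \<Longrightarrow>
               \<bar>divq q j s y\<bar> \<le> c5 * w s y powr (-1/k) * W2 s y powr (1/k)"
    and i6: "\<And>s y. s \<in> {a0<..<b0} \<Longrightarrow>
               norm (\<chi> i. F i s y) \<le> c6 * w s y powr (-1/k) * W2 s y powr (1/k)"
    and i7: "\<And>s y. s \<in> {a0<..<b0} \<Longrightarrow>
               sqrt (V s y) \<le> c7 * w s y powr (-1/k) * W2 s y powr (1/k)"
    and i8: "\<And>s y. s \<in> {a0<..<b0} \<Longrightarrow>
               \<bar>lap w s y\<bar> \<le> c8 * w s y powr ((k-2)/k) * W1 s y powr (2/k)"
    and i9: "\<And>s y. s \<in> {a0<..<b0} \<Longrightarrow>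
               norm (Qgrad q W1 s y) \<le> c9 * w s y powr (-1/k) * W1 s y * W2 s y powr (1/k)"
    and g_Linf: "\<And>n. 1 \<le> n \<Longrightarrow> Linf_on ({a0<..<b0} \<times> UNIV) (\<lambda>(s,y). g n t s x y)"
  shows "\<forall>n::nat. 1 \<le> n \<longrightarrow>
     (\<exists>B. \<forall>s\<in>{a0<..<b0}. \<forall>y. \<bar>pdt w s y / (w s y)\<^sup>2\<bar> \<le> B)
   \<and> (\<exists>B. \<forall>s\<in>{a0<..<b0}. \<forall>y. norm (grad w s y /\<^sub>R (w s y)\<^sup>2) \<le> B)
   \<and> (\<forall>s\<in>{a0<..<b0}. \<forall>y.
        w s y \<le> c1 * w s y powr ((k-2)/k) * W1 s y powr (2/k)
      \<and> norm (Qgrad (qn \<phi> W1 \<eta> q n) w s y) \<le> (2*c2) * w s y powr ((k-1)/k) * W1 s y powr (1/k)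
      \<and> \<bar>trQD2 (qn \<phi> W1 \<eta> q n) w s y\<bar> \<le> (c3 + \<eta>*c8) * w s y powr ((k-2)/k) * W1 s y powr (2/k)
      \<and> \<bar>pdt w s y\<bar> \<le> c4 * w s y powr ((k-2)/k) * W1 s y powr (2/k)
      \<and> (\<forall>j. (\<forall>i. pdiff_y (qn \<phi> W1 \<eta> q n i j) s y) \<longrightarrow>
             \<bar>divq (qn \<phi> W1 \<eta> q n) j s y\<bar> \<le> (c5 + 4*c9) * w s y powr (-1/k) * W2 s y powr (1/k))
      \<and> norm (\<chi> i. F i s y) \<le> c6 * w s y powr (-1/k) * W2 s y powr (1/k)
      \<and> sqrt (V s y) \<le> c7 * w s y powr (-1/k) * W2 s y powr (1/k))
   \<and> Linf_on ({a0<..<b0} \<times> UNIV) (\<lambda>(s,y). g n t s x y)"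
  proof (intro allI impI conjI)
  fix n :: nat assume n: "1 \<le> n"
  show "\<exists>B. \<forall>s\<in>{a0<..<b0}. \<forall>y. \<bar>pdt w s y / (w s y)\<^sup>2\<bar> \<le> B" by (rule w_bdd_t)
  show "\<exists>B. \<forall>s\<in>{a0<..<b0}. \<forall>y. norm (grad w s y /\<^sub>R (w s y)\<^sup>2) \<le> B" by (rule w_bdd_y)
  show "Linf_on ({a0<..<b0} \<times> UNIV) (\<lambda>(s,y). g n t s x y)" using g_Linf n by blast
  have nR: "real n > 0" using n by simp
  show "\<forall>s\<in>{a0<..<b0}. \<forall>y.
        w s y \<le> c1 * w s y powr ((k-2)/k) * W1 s y powr (2/k)
      \<and> norm (Qgrad (qn \<phi> W1 \<eta> q n) w s y) \<le> (2*c2) * w s y powr ((k-1)/k) * W1 s y powr (1/k)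
      \<and> \<bar>trQD2 (qn \<phi> W1 \<eta> q n) w s y\<bar> \<le> (c3 + \<eta>*c8) * w s y powr ((k-2)/k) * W1 s y powr (2/k)
      \<and> \<bar>pdt w s y\<bar> \<le> c4 * w s y powr ((k-2)/k) * W1 s y powr (2/k)
      \<and> (\<forall>j. (\<forall>i. pdiff_y (qn \<phi> W1 \<eta> q n i j) s y) \<longrightarrow>
             \<bar>divq (qn \<phi> W1 \<eta> q n) j s y\<bar> \<le> (c5 + 4*c9) * w s y powr (-1/k) * W2 s y powr (1/k))
      \<and> norm (\<chi> i. F i s y) \<le> c6 * w s y powr (-1/k) * W2 s y powr (1/k)
      \<and> sqrt (V s y) \<le> c7 * w s y powr (-1/k) * W2 s y powr (1/k)"
  proof (intro ballI allI conjI impI)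
    fix s y assume s: "s \<in> {a0<..<b0}"
    have s01: "s \<in> {0..1}" "s \<in> {0<..<1}" "s \<in> {0..t}" "s \<in> {0<..<t}" using s ab t by auto
    define p where "p = \<phi> (W1 s y / real n)"
    have p01: "0 \<le> p" "p \<le> 1" using phi_range p_def by auto
    have ell: "\<And>\<xi>. \<eta> * norm \<xi> \<le> norm (\<chi> i. \<Sum>j\<in>UNIV. q i j s y * \<xi>$j)"
      by (rule ellip[OF H2_eta H2_ell[OF s01(1)]])
    show "w s y \<le> c1 * w s y powr ((k-2)/k) * W1 s y powr (2/k)" using i1 s by blast
    show "\<bar>pdt w s y\<bar> \<le> c4 * w s y powr ((k-2)/k) * W1 s y powr (2/k)" using i4 s by blast
    show "norm (\<chi> i. F i s y) \<le> c6 * w s y powr (-1/k) * W2 s y powr (1/k)" using i6 s by blast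
    show "sqrt (V s y) \<le> c7 * w s y powr (-1/k) * W2 s y powr (1/k)" using i7 s by blast
    have dsum: "\<And>(X::'d \<Rightarrow> real) i. (\<Sum>j\<in>UNIV. (p * q i j s y + (1-p) * (if i = j then \<eta> else 0)) * X j)
        = p * (\<Sum>j\<in>UNIV. q i j s y * X j) + (1-p) * \<eta> * X i"
    proof -
      fix X :: "'d \<Rightarrow> real" and i
      have "(\<Sum>j\<in>UNIV. (p * q i j s y + (1-p) * (if i = j then \<eta> else 0)) * X j)
          = (\<Sum>j\<in>UNIV. p * (q i j s y * X j) + (if i = j then (1-p) * \<eta> * X j else 0))"
        by (rule sum.cong) (auto simp: algebra_simps)
      also have "\<dots> = p * (\<Sum>j\<in>UNIV. q i j s y * X j) + (1-p) * \<eta> * X i"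
        by (simp add: sum.distrib sum_distrib_left)
      finally show "?thesis X i" .
    qed
    have Qeq: "Qgrad (qn \<phi> W1 \<eta> q n) w s y = p *\<^sub>R Qgrad q w s y + ((1-p)*\<eta>) *\<^sub>R grad w s y"
      unfolding vec_eq_iff Qgrad_def grad_def qn_def p_def[symmetric]
      using dsum[where X="\<lambda>j. pDy j w s y"] by simp
    have gw: "\<eta> * norm (grad w s y) \<le> norm (Qgrad q w s y)"
      using ell[of "grad w s y"] by (simp add: Qgrad_def grad_def)
    have "norm (Qgrad (qn \<phi> W1 \<eta> q n) w s y) \<le> p * norm (Qgrad q w s y) + (1-p) * (\<eta> * norm (grad w s y))"
      unfolding Qeq using p01 H2_eta
      by (metis (no_types, lifting) abs_of_nonneg diff_ge_0_iff_ge mult.assoc norm_scaleR norm_triangle_ineq order_less_imp_le zero_le_mult_iff)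
    also have "\<dots> \<le> p * norm (Qgrad q w s y) + (1-p) * norm (Qgrad q w s y)"
      using gw p01 by (simp add: mult_left_mono)
    also have "\<dots> = norm (Qgrad q w s y)" by (simp add: algebra_simps)
    also have "\<dots> \<le> c2 * w s y powr ((k-1)/k) * W1 s y powr (1/k)" using i2 s by blast
    also have "\<dots> \<le> (2*c2) * w s y powr ((k-1)/k) * W1 s y powr (1/k)"
      using cs by (simp add: mult_right_mono)
    finally show "norm (Qgrad (qn \<phi> W1 \<eta> q n) w s y) \<le> (2*c2) * w s y powr ((k-1)/k) * W1 s y powr (1/k)" .
    have Teq: "trQD2 (qn \<phi> W1 \<eta> q n) w s y = p * trQD2 q w s y + (1-p) * \<eta> * lap w s y"
    proof -
      have "trQD2 (qn \<phi> W1 \<eta> q n) w s y = (\<Sum>i\<in>UNIV. p * (\<Sum>j\<in>UNIV. q i j s y * pDyy j i w s y) + (1-p) * \<eta> * pDyy i i w s y)"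
        unfolding trQD2_def qn_def p_def[symmetric]
        by (rule sum.cong[OF refl], rule dsum[where X="\<lambda>j. pDyy j _ w s y"])
      also have "\<dots> = p * trQD2 q w s y + (1-p) * \<eta> * lap w s y"
        unfolding trQD2_def lap_def by (simp add: sum.distrib sum_distrib_left)
      finally show ?thesis .
    qed
    let ?X = "w s y powr ((k-2)/k) * W1 s y powr (2/k)"
    have X0: "0 \<le> ?X" by simp
    have "\<bar>trQD2 (qn \<phi> W1 \<eta> q n) w s y\<bar> \<le> p * \<bar>trQD2 q w s y\<bar> + (1-p) * \<eta> * \<bar>lap w s y\<bar>"
      unfolding Teq using p01 H2_eta by (simp add: abs_mult abs_triangle_ineq[THEN order_trans])
    also have "\<dots> \<le> 1 * (c3 * ?X) + 1 * \<eta> * (c8 * ?X)"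
      apply (intro add_mono mult_mono)
      using p01 H2_eta i3[OF s] i8[OF s] cs by (auto simp: mult.assoc)
    finally show "\<bar>trQD2 (qn \<phi> W1 \<eta> q n) w s y\<bar> \<le> (c3 + \<eta>*c8) * w s y powr ((k-2)/k) * W1 s y powr (2/k)" by (simp add: algebra_simps)
    fix j assume pd: "\<forall>i. pdiff_y (qn \<phi> W1 \<eta> q n i j) s y"
    let ?P = "w s y powr (-1/k) * W2 s y powr (1/k)"
    define \<tau> where "\<tau> = W1 s y / real n"
    have W1nn: "0 \<le> W1 s y" using W1 s01(3) unfolding tdlf_def by blast
    have W1C: "C12 {0<..<t} W1" using W1 unfolding tdlf_def by blast
    have W1d: "\<And>l. ((\<lambda>h. W1 s (y + h *\<^sub>R axis l 1)) has_real_derivative pDy l W1 s y) (at 0)"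
    proof -
      fix l
      have "pdiff_y W1 s y" using W1C s01(4) unfolding C12_def by blast
      then have "(\<lambda>h. W1 s (y + h *\<^sub>R axis l 1)) differentiable (at 0)" unfolding pdiff_y_def by blast
      then show "?thesis l" unfolding pDy_def using DERIV_deriv_iff_real_differentiable by blast
    qed
    have phid: "\<And>z. (\<phi> has_real_derivative deriv \<phi> z) (at z)"
      using phi_smooth[of 0] DERIV_deriv_iff_real_differentiable by simp
    have ud: "\<And>l. ((\<lambda>h. \<phi> (W1 s (y + h *\<^sub>R axis l 1) / real n)) has_real_derivative
                  deriv \<phi> \<tau> * (pDy l W1 s y / real n)) (at 0)"
    proof -
      fix l
      have "((\<lambda>h. \<phi> (W1 s (y + h *\<^sub>R axis l 1) / real n)) has_real_derivative
                  deriv \<phi> (W1 s (y + 0 *\<^sub>R axis l 1) / real n) * (pDy l W1 s y / real n)) (at 0)"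
        by (rule DERIV_chain2[OF phid DERIV_cdivide[OF W1d]])
      then show "?thesis l" by (simp add: \<tau>_def)
    qed
    have gc: "\<And>i l. isCont (\<lambda>h. q i j s (y + h *\<^sub>R axis l 1)) 0"
    proof -
      fix i l
      have co: "continuous_on ({0<..<1} \<times> UNIV) (\<lambda>(s,y). q i j s y)"
        using H1_lip[of i j] unfolding C01_def by blast
      have "isCont (\<lambda>(s,y). q i j s y) (s, y + 0 *\<^sub>R axis l 1)"
        using continuous_on_eq_continuous_at[of "{0<..<1} \<times> UNIV", THEN iffD1, OF _ co] s01(2)
        by (simp add: open_Times)
      moreover have "isCont (\<lambda>h. (s, y + h *\<^sub>R axis l 1)) 0" by (intro continuous_intros)
      ultimately have "isCont (\<lambda>h. (\<lambda>(s,y). q i j s y) (s, y + h *\<^sub>R axis l 1)) 0"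
        using isCont_o2 by blast
      then show "?thesis i l" by simp
    qed
    have dF: "\<And>i l. (\<lambda>h. \<phi> (W1 s (y + h *\<^sub>R axis l 1) / real n) * q i j s (y + h *\<^sub>R axis l 1)
        + (1 - \<phi> (W1 s (y + h *\<^sub>R axis l 1) / real n)) * (if i = j then \<eta> else 0)) differentiable (at 0)"
      using pd unfolding pdiff_y_def qn_def by blast
    note QD = qn_deriv[OF ud gc dF]
    have Di: "\<And>i. pDy i (qn \<phi> W1 \<eta> q n i j) s y =
        deriv \<phi> \<tau> / real n * (pDy i W1 s y * (q i j s y - (if i = j then \<eta> else 0)))
        + (if p = 0 then 0 else p * pDy i (q i j) s y)"
      using QD(1) unfolding pDy_def qn_def by (simp add: p_def)
    have qdiff: "pdiff_y (q i j) s y" if "p \<noteq> 0" for i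
      unfolding pdiff_y_def using QD(2) that by (simp add: p_def)
    define T where "T = (\<Sum>i\<in>UNIV. pDy i W1 s y * (q i j s y - (if i = j then \<eta> else 0)))"
    have divE: "divq (qn \<phi> W1 \<eta> q n) j s y = deriv \<phi> \<tau> / real n * T + (if p = 0 then 0 else p * divq q j s y)"
      unfolding divq_def Di T_def by (simp add: sum.distrib sum_distrib_left)
    have T_eq: "T = (Qgrad q W1 s y)$j - \<eta> * (grad W1 s y)$j"
    proof -
      have "T = (\<Sum>i\<in>UNIV. q j i s y * pDy i W1 s y) - (\<Sum>i\<in>UNIV. if i = j then \<eta> * pDy i W1 s y else 0)"
        unfolding T_def sum_subtractf[symmetric]
        by (rule sum.cong) (auto simp: H2_sym algebra_simps)
      then show ?thesis by (simp add: Qgrad_def grad_def)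
    qed
    have gW: "\<eta> * norm (grad W1 s y) \<le> norm (Qgrad q W1 s y)"
      using ell[of "grad W1 s y"] by (simp add: Qgrad_def grad_def)
    have "\<bar>T\<bar> \<le> norm (Qgrad q W1 s y) + \<eta> * norm (grad W1 s y)"
    proof -
      have a: "\<bar>(Qgrad q W1 s y)$j\<bar> \<le> norm (Qgrad q W1 s y)" by (rule component_le_norm_cart)
      have "\<eta> * \<bar>(grad W1 s y)$j\<bar> \<le> \<eta> * norm (grad W1 s y)"
        using H2_eta component_le_norm_cart by (intro mult_left_mono) auto
      then have b: "\<bar>\<eta> * (grad W1 s y)$j\<bar> \<le> \<eta> * norm (grad W1 s y)" using H2_eta by (simp add: abs_mult)
      show ?thesis unfolding T_eq using a b by linarith
    qed
    also have "\<dots> \<le> 2 * norm (Qgrad q W1 s y)" using gW by simp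
    also have "\<dots> \<le> 2 * (c9 * w s y powr (-1/k) * W1 s y * W2 s y powr (1/k))" using i9[OF s] by simp
    finally have Tb: "\<bar>T\<bar> \<le> 2 * c9 * ?P * W1 s y" by (simp add: algebra_simps)
    have "\<bar>deriv \<phi> \<tau> / real n * T\<bar> = \<bar>deriv \<phi> \<tau>\<bar> / real n * \<bar>T\<bar>" using nR by (simp add: abs_mult)
    also have "\<dots> \<le> \<bar>deriv \<phi> \<tau>\<bar> / real n * (2 * c9 * ?P * W1 s y)"
      using Tb nR by (intro mult_left_mono) auto
    also have "\<dots> = 2 * c9 * ?P * \<bar>\<tau> * deriv \<phi> \<tau>\<bar>"
      using W1nn nR by (simp add: \<tau>_def abs_mult)
    also have "\<dots> \<le> 2 * c9 * ?P * 2"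
      using phi_deriv[of \<tau>] cs by (intro mult_left_mono) auto
    finally have t1: "\<bar>deriv \<phi> \<tau> / real n * T\<bar> \<le> 4 * c9 * ?P" by simp
    have t2: "\<bar>if p = 0 then 0 else p * divq q j s y\<bar> \<le> c5 * ?P"
    proof (cases "p = 0")
      case True then show ?thesis using cs by simp
    next
      case False
      have b: "\<bar>divq q j s y\<bar> \<le> c5 * ?P" using i5[OF s] qdiff[OF False] by (simp add: mult.assoc)
      have "\<bar>p * divq q j s y\<bar> \<le> 1 * \<bar>divq q j s y\<bar>" using p01 by (simp add: abs_mult mult_left_le_one_le)
      then show ?thesis using False b by simp
    qed
    have "\<bar>divq (qn \<phi> W1 \<eta> q n) j s y\<bar> \<le> (c5 + 4*c9) * ?P"
      unfolding divE using t1 t2 by (smt (verit) distrib_right)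
    then show "\<bar>divq (qn \<phi> W1 \<eta> q n) j s y\<bar> \<le> (c5 + 4*c9) * w s y powr (-1/k) * W2 s y powr (1/k)"
      by (simp add: mult.assoc)
  qed
qed

end
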